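(* Let $q$ be an odd prime power, $m\geq 2$, $n=\frac{q^m+1}{2}$, and suppose $q^m\equiv 1\pmod 4$. Let $i$ be an odd integer with $\frac{q^m-1}{2}-q^{m-1}<i<n$ of the form $i=\frac{q-3}{2}q^{m-1}+i_{m-2}q^{m-2}+\cdots+i_1q+i_0$, where $i_0,i_1,\ldots,i_{m-2}\in\{\frac{q-3}{2},\frac{q-1}{2},\frac{q+1}{2}\}$. Then $i$ is not a coset leader modulo $q^m+1$.
   Context: The $q$-cyclotomic coset of $i$ modulo $q^m+1$ is $\{i,iq,iq^2,\ldots\}\bmod(q^m+1)$; its smallest element is its coset leader, and $i$ is called a coset leader if it is the coset leader of its own coset. *)

theory Defs
  imports "HOL-Computational_Algebra.Primes"
begin

definition prime_power :: "nat \<Rightarrow> bool" where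
  "prime_power q \<longleftrightarrow> (\<exists>p k. prime p \<and> k \<ge> 1 \<and> q = p ^ k)"

definition cyc_coset :: "nat \<Rightarrow> nat \<Rightarrow> nat \<Rightarrow> nat set" where
  "cyc_coset q N i = {(i * q ^ j) mod N | j. True}"

definition is_coset_leader :: "nat \<Rightarrow> nat \<Rightarrow> nat \<Rightarrow> bool" where
  "is_coset_leader q N i \<longleftrightarrow> i = Min (cyc_coset q N i)"

end

theory Submission
  imports Defs
begin

lemma geo: "((q::int) - 1) * (\<Sum>l<k. q^l) = q^k - 1"
  by (induction k) (auto simp: algebra_simps)

lemma absbound:
  fixes e :: "nat \<Rightarrow> int" and q :: int
  assumes "q \<ge> 1" "\<forall>l<k. \<bar>e l\<bar> \<le> q - 1"
  shows "\<bar>\<Sum>l<k. e l * q^l\<bar> \<le> q^k - 1"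
  using assms(2)
proof (induction k)
  case 0 then show ?case by simp
next
  case (Suc k)
  have ih: "\<bar>\<Sum>l<k. e l * q^l\<bar> \<le> q^k - 1" using Suc by auto
  have "\<bar>e k * q^k\<bar> = \<bar>e k\<bar> * q^k" using assms(1) by (simp add: abs_mult)
  also have "\<dots> \<le> (q - 1) * q^k" using Suc.prems assms(1) by (intro mult_right_mono) auto
  finally have "\<bar>e k * q^k\<bar> \<le> (q-1) * q^k" .
  then have "\<bar>\<Sum>l<Suc k. e l * q^l\<bar> \<le> q^k - 1 + (q-1)*q^k"
    using ih by (simp add: abs_triangle_ineq[THEN order_trans])
  then show ?case by (simp add: algebra_simps)
qed

lemma lepos:
  fixes e :: "nat \<Rightarrow> int" and q :: int
  assumes "q \<ge> 1" "k < m" "\<forall>l. k < l \<and> l < m \<longrightarrow> e l = 0" "e k \<ge> 1" "\<forall>l<k. \<bar>e l\<bar> \<le> q - 1"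
  shows "(\<Sum>l<m. e l * q^l) > 0"
proof -
  have "(\<Sum>l<m. e l * q^l) = (\<Sum>l<Suc k. e l * q^l)"
    by (rule sum.mono_neutral_right) (use assms in auto)
  also have "\<dots> = (\<Sum>l<k. e l * q^l) + e k * q^k" by simp
  finally have eq: "(\<Sum>l<m. e l * q^l) = (\<Sum>l<k. e l * q^l) + e k * q^k" .
  have "\<bar>\<Sum>l<k. e l * q^l\<bar> \<le> q^k - 1" using absbound assms by blast
  moreover have "e k * q^k \<ge> q^k" using assms(1,4) by simp
  ultimately show ?thesis unfolding eq by linarith
qed

lemma revsum: "(\<Sum>j<m. (a::nat\<Rightarrow>int) j * q^(m-1-j)) = (\<Sum>l<m. a (m-1-l) * q^l)"
proof -
  have "(\<Sum>j<m. a j * q^(m-1-j)) = (\<Sum>l<m. a (m - Suc l) * q^(m-1-(m - Suc l)))"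
    by (rule sum.nat_diff_reindex[symmetric])
  also have "\<dots> = (\<Sum>l<m. a (m-1-l) * q^l)"
    by (rule sum.cong) auto
  finally show ?thesis .
qed

lemma lex:
  fixes a b :: "nat \<Rightarrow> int" and q :: int
  assumes "q \<ge> 1" "p < m" "\<forall>j<p. a j = b j" "a p < b p" "\<forall>j<m. \<bar>a j - b j\<bar> \<le> q - 1"
  shows "(\<Sum>j<m. a j * q^(m-1-j)) < (\<Sum>j<m. b j * q^(m-1-j))"
proof -
  define e where "e l = b (m-1-l) - a (m-1-l)" for l
  have "(\<Sum>j<m. b j * q^(m-1-j)) - (\<Sum>j<m. a j * q^(m-1-j)) = (\<Sum>j<m. (b j - a j) * q^(m-1-j))"
    by (simp add: sum_subtractf algebra_simps)
  also have "\<dots> = (\<Sum>l<m. e l * q^l)" unfolding e_def by (rule revsum)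
  also have "\<dots> > 0"
  proof (rule lepos[where k="m-1-p"])
    show "\<forall>l. m-1-p < l \<and> l < m \<longrightarrow> e l = 0" using assms(3) unfolding e_def by auto
    show "e (m-1-p) \<ge> 1" using assms(2,4) unfolding e_def by auto
    show "\<forall>l<m-1-p. \<bar>e l\<bar> \<le> q - 1"
    proof (intro allI impI)
      fix l assume "l < m-1-p"
      then have "m-1-l < m" using assms(2) by simp
      then show "\<bar>e l\<bar> \<le> q - 1" using assms(5) unfolding e_def by (simp add: abs_minus_commute)
    qed
  qed (use assms in auto)
  finally show ?thesis by simp
qed

lemma bnd:
  fixes a :: "nat \<Rightarrow> int" and q :: int
  assumes "q \<ge> 0" "\<forall>j<m. \<bar>a j\<bar> \<le> 1"
  shows "\<bar>\<Sum>j<m. a j * q^(m-1-j)\<bar> \<le> (\<Sum>l<m. q^l)"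
proof -
  have "\<bar>\<Sum>j<m. a j * q^(m-1-j)\<bar> = \<bar>\<Sum>l<m. a (m-1-l) * q^l\<bar>" using revsum[where a=a and m=m and q=q] by simp
  also have "\<dots> \<le> (\<Sum>l<m. \<bar>a (m-1-l) * q^l\<bar>)" by (rule sum_abs)
  also have "\<dots> \<le> (\<Sum>l<m. q^l)"
  proof (rule sum_mono)
    fix l assume "l \<in> {..<m}"
    then have "\<bar>a (m-1-l)\<bar> \<le> 1" using assms(2) by auto
    then show "\<bar>a (m-1-l) * q^l\<bar> \<le> q^l" using assms(1)
      by (simp add: abs_mult mult_left_le_one_le)
  qed
  finally show ?thesis .
qed

lemma winstep:
  fixes c :: "nat \<Rightarrow> int" and q :: int
  assumes anti: "\<And>t. c (t+m) = - c t" and m: "m \<ge> 1"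
  shows "q * (\<Sum>j<m. c (s+j) * q^(m-1-j)) = (\<Sum>j<m. c (Suc s+j) * q^(m-1-j)) + c s * (q^m + 1)"
proof -
  obtain k where k: "m = Suc k" using m by (cases m) auto
  have "q * (\<Sum>j<m. c (s+j) * q^(m-1-j)) = (\<Sum>j<Suc k. c (s+j) * q^(Suc k-j))"
    unfolding k by (simp add: sum_distrib_left algebra_simps Suc_diff_le)
  also have "\<dots> = c s * q^m + (\<Sum>j<k. c (Suc s+j) * q^(k-j))"
    unfolding sum.lessThan_Suc_shift k by simp
  finally have A: "q * (\<Sum>j<m. c (s+j) * q^(m-1-j)) = c s * q^m + (\<Sum>j<k. c (Suc s+j) * q^(k-j))" .
  have "(\<Sum>j<m. c (Suc s+j) * q^(m-1-j)) = (\<Sum>j<k. c (Suc s+j) * q^(k-j)) + c (Suc s + k)"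
    unfolding k by simp
  moreover have "c (Suc s + k) = - c s" using anti[of s] k by simp
  ultimately show ?thesis using A by (simp add: algebra_simps)
qed

lemma windvd:
  fixes c :: "nat \<Rightarrow> int" and q :: int
  assumes anti: "\<And>t. c (t+m) = - c t" and m: "m \<ge> 1"
  shows "(q^m + 1) dvd ((\<Sum>j<m. c (s+j) * q^(m-1-j)) - q^s * (\<Sum>j<m. c j * q^(m-1-j)))"
proof (induction s)
  case 0 then show ?case by simp
next
  case (Suc s)
  define V where "V s = (\<Sum>j<m. c (s+j) * q^(m-1-j))" for s
  have st: "V (Suc s) = q * V s - c s * (q^m+1)" using winstep[where c=c and m=m and q=q and s=s, OF anti m] unfolding V_def by simp
  have "(q^m+1) dvd (q * (V s - q^s * V 0) - c s * (q^m+1))"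
  proof (rule dvd_diff)
    show "(q^m+1) dvd (q * (V s - q^s * V 0))" using Suc unfolding V_def by (simp add: dvd_mult)
  qed simp
  moreover have "q * (V s - q^s * V 0) - c s * (q^m+1) = V (Suc s) - q^Suc s * V 0"
    using st by (simp add: algebra_simps)
  ultimately show ?case unfolding V_def by simp
qed

lemma comb:
  fixes c :: "nat \<Rightarrow> int" and m g :: nat
  assumes anti: "\<And>t. c (t+m) = - c t" and dig: "\<And>t. c t \<in> {-1,0,1}" and c0: "c 0 = -1"
    and g: "0<g" "g<m" "c g = 1" "\<And>j. 0<j \<Longrightarrow> j<g \<Longrightarrow> c j = 0"
    and ev: "even (\<Sum>t<m. c t)"
    and nolex: "\<And>s p. p<m \<Longrightarrow> (\<forall>j<p. c (s+j) = c j) \<Longrightarrow> c (s+p) < c p \<Longrightarrow> False"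
  shows False
proof -
  have A: "c (s+d) = 1" if h: "c s = -1" "0<d" "\<And>j. 0<j \<Longrightarrow> j<d \<Longrightarrow> c (s+j) = 0" "c (s+d) \<noteq> 0" for s d
  proof (rule ccontr)
    assume "c (s+d) \<noteq> 1"
    then have cd: "c (s+d) = -1" using dig[of "s+d"] h(4) by auto
    have csm: "c (s+m) = 1" using anti[of s] h(1) by (simp add: add.commute)
    have "d < m"
    proof (rule ccontr)
      assume "\<not> d < m"
      then have "d = m \<or> m < d" by auto
      then show False
      proof
        assume "d = m" then show False using cd csm by simp
      next
        assume "m < d" then show False using h(3)[of m] csm g by simp
      qed
    qed
    consider "d < g" | "d = g" | "g < d" by linarith
    then show False
    proof cases
      case 1
      show False
      proof (rule nolex[of d s])
        show "\<forall>j<d. c (s+j) = c j"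
        proof (intro allI impI)
          fix j assume "j < d"
          then show "c (s+j) = c j" using h(1,3) g(4) c0 1 by (cases "j = 0") auto
        qed
        show "c (s+d) < c d" using cd g(4)[of d] 1 h(2) by simp
      qed (use \<open>d<m\<close> in simp)
    next
      case 2
      show False
      proof (rule nolex[of g s])
        show "\<forall>j<g. c (s+j) = c j"
        proof (intro allI impI)
          fix j assume "j < g"
          then show "c (s+j) = c j" using h(1,3) g(4) c0 2 by (cases "j = 0") auto
        qed
        show "c (s+g) < c g" using cd g(3) 2 by simp
      qed (use g in simp)
    next
      case 3
      show False
      proof (rule nolex[of g s])
        show "\<forall>j<g. c (s+j) = c j"
        proof (intro allI impI)
          fix j assume "j < g"
          then show "c (s+j) = c j" using h(1,3) g(4) c0 3 by (cases "j = 0") auto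
        qed
        show "c (s+g) < c g" using h(3)[of g] g 3 by simp
      qed (use g in simp)
    qed
  qed
  have B: "c (s+d) = - c s" if h: "c s \<noteq> 0" "0<d" "\<And>j. 0<j \<Longrightarrow> j<d \<Longrightarrow> c (s+j) = 0" "c (s+d) \<noteq> 0" for s d
  proof -
    have "c s = -1 \<or> c s = 1" using dig[of s] h(1) by auto
    then show ?thesis
    proof
      assume "c s = -1" then show ?thesis using A[OF _ h(2-4)] by simp
    next
      assume cs: "c s = 1"
      have "c ((s+m)+d) = 1"
      proof (rule A)
        show "c (s+m) = -1" using anti[of s] cs by simp
        show "0 < d" by fact
        show "c (s+m+j) = 0" if "0<j" "j<d" for j
          using anti[of "s+j"] h(3)[OF that] by (simp add: ac_simps)
        show "c (s+m+d) \<noteq> 0" using anti[of "s+d"] h(4) by (simp add: ac_simps)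
      qed
      then show ?thesis using anti[of "s+d"] cs by (simp add: ac_simps)
    qed
  qed
  have inv: "\<exists>s<t. c s \<noteq> 0 \<and> (\<forall>j. s<j \<and> j<t \<longrightarrow> c j = 0) \<and> (\<Sum>j<t. c j) = (c s - 1) div 2"
    if "t \<ge> 1" for t
    using that
  proof (induction t)
    case 0 then show ?case by simp
  next
    case (Suc t)
    show ?case
    proof (cases "t = 0")
      case True
      then show ?thesis using c0 by (intro exI[of _ 0]) auto
    next
      case False
      then obtain s where s: "s<t" "c s \<noteq> 0" "\<forall>j. s<j \<and> j<t \<longrightarrow> c j = 0" "(\<Sum>j<t. c j) = (c s - 1) div 2"
        using Suc by auto
      show ?thesis
      proof (cases "c t = 0")
        case True
        then show ?thesis using s by (intro exI[of _ s]) (auto simp: less_Suc_eq)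
      next
        case False
        have "c (s + (t-s)) = - c s"
          by (rule B) (use s False in auto)
        then have ct: "c t = - c s" using s by simp
        have "c s = -1 \<or> c s = 1" using dig[of s] s(2) by auto
        then show ?thesis using s ct False by (intro exI[of _ t]) auto
      qed
    qed
  qed
  obtain s where s: "s < Suc m" "c s \<noteq> 0" "\<forall>j. s<j \<and> j<Suc m \<longrightarrow> c j = 0" "(\<Sum>j<Suc m. c j) = (c s - 1) div 2"
    using inv[of "Suc m"] by auto
  have cm: "c m = 1" using anti[of 0] c0 by simp
  have "s = m"
  proof (rule ccontr)
    assume "s \<noteq> m" then have "s < m" using s(1) by simp
    then show False using s(3) cm by auto
  qed
  then have "(\<Sum>j<m. c j) = -1" using s(4) cm by simp
  then show False using ev by simp
qed

lemma antilem:
  fixes f :: "nat \<Rightarrow> int"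
  assumes "m > 0"
  shows "(\<lambda>t. if t mod (2*m) < m then f (m - 1 - t mod (2*m)) else - f (2*m - 1 - t mod (2*m))) (t+m)
       = - (\<lambda>t. if t mod (2*m) < m then f (m - 1 - t mod (2*m)) else - f (2*m - 1 - t mod (2*m))) t"
proof -
  define r where "r = t mod (2*m)"
  have r: "r < 2*m" using assms unfolding r_def by simp
  have e: "(t+m) mod (2*m) = (r + m) mod (2*m)" unfolding r_def by (simp add: mod_add_left_eq)
  show ?thesis
  proof (cases "r < m")
    case True
    then have "(t+m) mod (2*m) = r + m" using e by simp
    then show ?thesis using True unfolding r_def[symmetric] by simp
  next
    case False
    have "(r+m) mod (2*m) = (r + m - 2*m) mod (2*m)" using False by (simp add: le_mod_geq)
    also have "\<dots> = r - m" using r False by simp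
    finally have "(t+m) mod (2*m) = r - m" using e by simp
    moreover have "m + m - Suc r = 2*m - Suc r" by simp
    ultimately show ?thesis using False r unfolding r_def[symmetric] by (simp del: mult_2)
  qed
qed

theorem lemma29:
  fixes q m i :: nat and d :: "nat \<Rightarrow> nat"
  assumes "prime_power q" and "odd q" and "m \<ge> 2"
    and "n = (q ^ m + 1) div 2"
    and "q ^ m mod 4 = 1"
    and "odd i"
    and "(q ^ m - 1) div 2 - q ^ (m - 1) < i" and "i < n"
    and "i = ((q - 3) div 2) * q ^ (m - 1) + (\<Sum>j<m - 1. d j * q ^ j)"
    and "\<forall>j<m - 1. d j \<in> {(q - 3) div 2, (q - 1) div 2, (q + 1) div 2}"
  shows "\<not> is_coset_leader q (q ^ m + 1) i"
proof
  assume lead: "is_coset_leader q (q ^ m + 1) i"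
  define N where "N = q^m + 1"
  have q2: "q \<ge> 2"
  proof -
    obtain p e where "prime p" "e \<ge> 1" "q = p^e" using assms(1) unfolding prime_power_def by auto
    then have "p \<ge> 2" using prime_ge_2_nat by auto
    moreover have "p^e \<ge> p" using \<open>e \<ge> 1\<close> \<open>p \<ge> 2\<close> by (intro self_le_power) auto
    ultimately show ?thesis using \<open>q = p^e\<close> by linarith
  qed
  obtain r where r: "q = 2*r+1" using assms(2) by (metis oddE)
  have r1: "r \<ge> 1" using q2 r by simp
  obtain k where k: "m = Suc k" using assms(3) by (cases m) auto
  have k1: "k \<ge> 1" using assms(3) k by simp
  obtain a where a: "q^m = 4*a+1" using assms(5) by (metis mod_mult_div_eq mult.commute add.commute)
  have n: "n = 2*a+1" using assms(4) a by simp
  have NN: "N = 2*n" unfolding N_def using a n by simp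
  define Q where "Q = int q"
  have Q: "Q = 2 * int r + 1" unfolding Q_def using r by simp
  have Qm: "int N = Q^m + 1" unfolding N_def Q_def by simp
  have Nn: "2 * int n = Q^m + 1" using NN Qm by simp
  have digs: "int (d j) - int r \<in> {-1,0,1}" if "j < k" for j
  proof -
    have "d j \<in> {r-1, r, r+1}" using assms(10) that k r by auto
    then show ?thesis using r1 by auto
  qed
  define f where "f j = (if j = k then -1 else if j = 0 then int (d 0) - int r - 1 else int (d j) - int r)" for j
  define F where "F = (\<Sum>j<m. f j * Q^j)"
  define D where "D = (\<Sum>j<k. int (d j) * Q^j)"
  define G where "G = (\<Sum>j<k. Q^j)"
  have geoG: "(Q - 1) * G = Q^k - 1" unfolding G_def by (rule geo)
  have iD: "int i = (int r - 1) * Q^k + D"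
  proof -
    have "(q - 3) div 2 = r - 1" using r by simp
    then have "i = (r-1) * q^k + (\<Sum>j<k. d j * q^j)" using assms(9) k by simp
    then show ?thesis unfolding D_def Q_def using r1 by (simp add: of_nat_diff)
  qed
  have Fk: "F = (\<Sum>j<k. f j * Q^j) - Q^k" unfolding F_def k by (simp add: f_def)
  have "(\<Sum>j<k. f j * Q^j) = (\<Sum>j<k. (int (d j) - int r) * Q^j - (if j = 0 then Q^j else 0))"
    by (rule sum.cong) (auto simp: f_def)
  also have "\<dots> = (\<Sum>j<k. (int (d j) - int r) * Q^j) - (\<Sum>j<k. (if j = 0 then Q^j else 0))"
    by (simp add: sum_subtractf)
  also have "(\<Sum>j<k. (if j = 0 then Q^j else 0)) = 1" using k1 by (simp add: sum.delta)
  also have "(\<Sum>j<k. (int (d j) - int r) * Q^j) = D - int r * G"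
    by (simp add: D_def G_def sum_subtractf sum_distrib_left left_diff_distrib)
  finally have Fs: "F = D - int r * G - 1 - Q^k" using Fk by simp
  have iF: "int i = int n + F"
  proof -
    have "2 * int r * G = Q^k - 1" using geoG Q by simp
    moreover have "Q^m = Q * Q^k" using k by simp
    ultimately have "2 * int i = 2 * (int n + F)" using Nn iD Fs Q by (simp add: algebra_simps)
    then show ?thesis by simp
  qed
  have Feven: "even F"
  proof -
    have "odd (int i)" "odd (int n)" using assms(6) n by auto
    then show ?thesis using iF by (metis odd_add add_diff_cancel_left')
  qed
  have Fgt: "-(Q^k) < F"
  proof -
    have qk: "q^k \<le> (q^m - 1) div 2"
    proof -
      have "q^m = q * q^k" using k by simp
      moreover have "q^k \<ge> 1" using q2 by simp
      moreover have "3 * q^k \<le> q * q^k" using q2 r by (intro mult_right_mono) auto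
      ultimately have "q^m \<ge> 2 * q^k + 1" by linarith
      then show ?thesis by linarith
    qed
    have "(q^m - 1) div 2 = n - 1" using a n by simp
    then have "n - 1 - q^k < i" using assms(7) k by simp
    then have "int (n - 1 - q^k) < int i" by simp
    moreover have "int (n - 1 - q^k) = int n - 1 - Q^k" using qk \<open>(q^m - 1) div 2 = n - 1\<close> n
      unfolding Q_def by (simp add: of_nat_diff)
    ultimately have "int n - 1 - Q^k < int i" by simp
    then have "-(Q^k) \<le> F" using iF by simp
    moreover have "odd (Q^k)" using assms(2) unfolding Q_def by simp
    ultimately show ?thesis using Feven by (metis order_le_less even_minus)
  qed
  define c where "c = (\<lambda>t. if t mod (2*m) < m then f (m - 1 - t mod (2*m)) else - f (2*m - 1 - t mod (2*m)))"
  have anti: "c (t+m) = - c t" for t unfolding c_def using antilem[where m=m and f=f and t=t] k by simp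
  have cj: "c j = f (m-1-j)" if "j < m" for j unfolding c_def using that by simp
  have crange: "\<exists>l<m. c t = f l \<or> c t = - f l" for t
  proof -
    have "t mod (2*m) < 2*m" using k by simp
    show ?thesis
    proof (cases "t mod (2*m) < m")
      case True then show ?thesis unfolding c_def by (intro exI[of _ "m - 1 - t mod (2*m)"]) auto
    next
      case False then show ?thesis using \<open>t mod (2*m) < 2*m\<close> unfolding c_def by (intro exI[of _ "2*m - 1 - t mod (2*m)"]) auto
    qed
  qed
  define V where "V s = (\<Sum>j<m. c (s+j) * Q^(m-1-j))" for s
  have V0: "V 0 = F"
  proof -
    have "V 0 = (\<Sum>l<m. c (m-1-l) * Q^l)" unfolding V_def using revsum[where a=c and m=m and q=Q] by simp
    also have "\<dots> = F" unfolding F_def by (rule sum.cong) (auto simp: cj)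
    finally show ?thesis .
  qed
  have elem: "int (i*q^s mod N) = int n + V s" if "0 \<le> int n + V s" "int n + V s < int N" for s
  proof -
    have e1: "int (i*q^s mod N) = (int i * Q^s) mod int N" unfolding Q_def by (simp add: of_nat_mod)
    have d1: "int N dvd (V s - Q^s * V 0)" unfolding Qm V_def
      using windvd[where c=c and m=m and q=Q and s=s, OF anti] k by simp
    have g: "(Q - 1) * (\<Sum>l<s. Q^l) = Q^s - 1" by (rule geo)
    have "int n * (Q^s - 1) = int n * ((Q - 1) * (\<Sum>l<s. Q^l))" using g by simp
    also have "\<dots> = (2 * int n) * (int r * (\<Sum>l<s. Q^l))" using Q by (simp add: algebra_simps)
    also have "\<dots> = int N * (int r * (\<Sum>l<s. Q^l))" using NN by simp
    finally have "int n * (Q^s - 1) = int N * (int r * (\<Sum>l<s. Q^l))" .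
    then have d2: "int N dvd int n * (Q^s - 1)" by simp
    have eqn: "int i * Q^s - (int n + V s) = int n * (Q^s - 1) - (V s - Q^s * V 0)"
      using iF V0 by (simp add: algebra_simps)
    have "int N dvd (int i * Q^s - (int n + V s))" unfolding eqn by (rule dvd_diff[OF d2 d1])
    then have "(int i * Q^s) mod int N = (int n + V s) mod int N" by (simp add: mod_eq_dvd_iff)
    then show ?thesis using e1 that by simp
  qed
  have leadle: "i \<le> i*q^s mod N" for s
  proof -
    have fin: "finite (cyc_coset q N i)"
      by (rule finite_subset[of _ "{..<N}"]) (auto simp: cyc_coset_def N_def)
    have "i*q^s mod N \<in> cyc_coset q N i" unfolding cyc_coset_def by blast
    then have "Min (cyc_coset q N i) \<le> i*q^s mod N" using fin by simp
    then show ?thesis using lead unfolding is_coset_leader_def N_def by simp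
  qed
  have key: "V 0 \<le> V s" if "- int n \<le> V s" "V s < int n" for s
  proof -
    have "int i \<le> int (i*q^s mod N)" using leadle[of s] by simp
    also have "\<dots> = int n + V s" using elem[of s] that NN by simp
    finally show ?thesis using iF V0 by simp
  qed
  have fk: "f k = -1" unfolding f_def by simp
  have fmid: "f j \<in> {-1,0,1}" if "0 < j" "j < m" for j
  proof (cases "j = k")
    case True then show ?thesis using fk by simp
  next
    case False then have "j < k" using that k by simp
    then show ?thesis using digs[of j] that False unfolding f_def by simp
  qed
  have c0: "c 0 = -1" using cj[of 0] k fk by simp
  have cmm: "c m = 1" using anti[of 0] c0 by simp
  have Q3: "Q \<ge> 3" using Q r1 by simp
  show False
  proof (cases "d 0 = r - 1")
    case False
    have "d 0 \<in> {r-1, r, r+1}" using assms(10) k k1 r by auto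
    then have f0: "f 0 \<in> {-1,0}" using False k1 unfolding f_def by auto
    have fall: "f j \<in> {-1,0,1}" if "j < m" for j
      using f0 fmid[of j] that by (cases "j = 0") auto
    have dig: "c t \<in> {-1,0,1}" for t
    proof -
      obtain l where "l < m" "c t = f l \<or> c t = - f l" using crange by blast
      then show ?thesis using fall[of l] by auto
    qed
    have cab: "\<bar>c t\<bar> \<le> 1" for t using dig[of t] by auto
    have Vb: "\<bar>V s\<bar> < int n" for s
    proof -
      have "\<bar>V s\<bar> \<le> (\<Sum>l<m. Q^l)" unfolding V_def using bnd[where a="\<lambda>x. c (s+x)" and m=m and q=Q] cab Q3 by simp
      moreover have "(Q - 1) * (\<Sum>l<m. Q^l) = Q^m - 1" by (rule geo)
      moreover have "2 * (\<Sum>l<m. Q^l) \<le> (Q - 1) * (\<Sum>l<m. Q^l)"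
        using Q3 by (intro mult_right_mono) (auto intro: sum_nonneg)
      ultimately show ?thesis using Nn by linarith
    qed
    have nolex: False if "p < m" "\<forall>j<p. c (s+j) = c j" "c (s+p) < c p" for s p
    proof -
      have "(\<Sum>j<m. c (s+j) * Q^(m-1-j)) < (\<Sum>j<m. c j * Q^(m-1-j))"
      proof (rule lex[where a="\<lambda>x. c (s+x)" and b=c])
        show "\<forall>j<m. \<bar>c (s+j) - c j\<bar> \<le> Q - 1"
        proof (intro allI impI)
          fix j
          show "\<bar>c (s+j) - c j\<bar> \<le> Q - 1"
            using abs_triangle_ineq4[of "c (s+j)" "c j"] cab[of "s+j"] cab[of j] Q3 by linarith
        qed
      qed (use that Q3 in auto)
      then have "V s < V 0" by (simp add: V_def)
      moreover have "V 0 \<le> V s" using key[of s] Vb[of s] by simp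
      ultimately show False by simp
    qed
    define g where "g = (LEAST g. 0 < g \<and> c g \<noteq> 0)"
    have Pm: "0 < m \<and> c m \<noteq> 0" using cmm k by simp
    have gP: "0 < g \<and> c g \<noteq> 0" unfolding g_def by (rule LeastI[of _ m]) (use Pm in auto)
    have gle: "g \<le> m" unfolding g_def by (rule Least_le) (use Pm in auto)
    have gz: "c j = 0" if "0 < j" "j < g" for j
      using not_less_Least[of j "\<lambda>g. 0 < g \<and> c g \<noteq> 0"] that unfolding g_def by auto
    define b where "b (j::nat) = (if j = 0 then -1 else (0::int))" for j
    have Vb0: "(\<Sum>j<m. b j * Q^(m-1-j)) = -(Q^k)"
    proof -
      have "(\<Sum>j<m. b j * Q^(m-1-j)) = (\<Sum>j<m. if j = 0 then -(Q^k) else 0)"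
        by (rule sum.cong) (auto simp: b_def k)
      also have "\<dots> = -(Q^k)" using k by (simp add: sum.delta)
      finally show ?thesis .
    qed
    have gm: "g \<noteq> m"
    proof
      assume "g = m"
      have "V 0 = (\<Sum>j<m. b j * Q^(m-1-j))" unfolding V_def
        by (rule sum.cong) (use gz c0 \<open>g = m\<close> in \<open>auto simp: b_def\<close>)
      then show False using Vb0 Fgt V0 by simp
    qed
    have gc: "c g \<noteq> -1"
    proof
      assume cg: "c g = -1"
      have "(\<Sum>j<m. c j * Q^(m-1-j)) < (\<Sum>j<m. b j * Q^(m-1-j))"
      proof (rule lex[where p=g])
        show "\<forall>j<g. c j = b j" using gz c0 by (auto simp: b_def)
        show "c g < b g" using cg gP by (simp add: b_def)
        show "\<forall>j<m. \<bar>c j - b j\<bar> \<le> Q - 1"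
        proof (intro allI impI)
          fix j
          show "\<bar>c j - b j\<bar> \<le> Q - 1"
            using cab[of j] Q3 c0 by (cases "j = 0") (auto simp: b_def abs_le_iff)
        qed
      qed (use Q3 gle gm in auto)
      then show False using Vb0 Fgt V0 unfolding V_def by simp
    qed
    have cg1: "c g = 1" using dig[of g] gP gc by auto
    have ev: "even (\<Sum>t<m. c t)"
    proof -
      have "V 0 - (\<Sum>t<m. c t) = (\<Sum>t<m. c t * (Q^(m-1-t) - 1))"
        unfolding V_def by (simp add: sum_subtractf algebra_simps)
      moreover have "even (\<Sum>t<m. c t * (Q^(m-1-t) - 1))"
        using assms(2) unfolding Q_def by (intro dvd_sum) simp
      ultimately have "even (V 0 - (\<Sum>t<m. c t))" by simp
      moreover have "even (V 0)" using Feven V0 by simp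
      ultimately show ?thesis by presburger
    qed
    show False
      by (rule comb[OF anti dig c0, of g]) (use gP gle gm cg1 gz ev nolex in auto)
  next
    case True
    note d0 = True
    show False
    proof (cases "q = 3")
      case True
      then have r1': "r = 1" using r by simp
      have "q dvd (\<Sum>j<k. d j * q^j)"
      proof (rule dvd_sum)
        fix j assume "j \<in> {..<k}"
        show "q dvd d j * q^j"
        proof (cases "j = 0")
          case True then show ?thesis using d0 r1' by simp
        next
          case False then show ?thesis by (simp add: dvd_power)
        qed
      qed
      moreover have "i = (\<Sum>j<k. d j * q^j)" using assms(9) k r1' True by simp
      ultimately obtain i' where i': "i = q * i'" by (auto elim: dvdE)
      have ipos: "i > 0" using assms(6) by (cases i) auto
      have "q^(2*m) = N * (q^m - 1) + 1"
      proof -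
        have "q^m \<noteq> 0" using q2 by simp
        then obtain y where y: "q^m = Suc y" using not0_implies_Suc by blast
        have "q^(2*m) = q^m * q^m" by (simp add: mult_2 power_add)
        also have "\<dots> = Suc y * Suc y" by (simp only: y)
        also have "\<dots> = (Suc y + 1) * y + 1" by (simp add: algebra_simps)
        also have "\<dots> = N * (q^m - 1) + 1" unfolding N_def y by simp
        finally show ?thesis .
      qed
      moreover have "i * q^(2*m-1) = i' * q^(2*m)"
      proof -
        obtain t where t: "2*m-1 = t" "2*m = Suc t" using k by simp
        have "q * q^(2*m-1) = q^(2*m)" unfolding t by simp
        then have "i' * (q * q^(2*m-1)) = i' * q^(2*m)" by simp
        then show ?thesis using i' by (simp add: ac_simps)
      qed
      moreover have gen: "i' * (N * x + 1) = N * (i' * x) + i'" for x :: nat by (simp add: algebra_simps)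
      ultimately have "i * q^(2*m-1) = N * (i' * (q^m - 1)) + i'" by metis
      then have "i * q^(2*m-1) mod N = i' mod N" by simp
      moreover have "i' < N"
      proof -
        have "1 * i' \<le> q * i'" using q2 by (intro mult_le_mono1) simp
        then have "i' \<le> i" using i' by simp
        then show ?thesis using assms(8) NN by linarith
      qed
      ultimately have "i * q^(2*m-1) mod N = i'" by simp
      then have "i \<le> i'" using leadle[of "2*m-1"] by simp
      moreover have "i' < i"
      proof -
        have "i = 3 * i'" using i' True by simp
        then show ?thesis using ipos by linarith
      qed
      ultimately show False by simp
    next
      case False
      then have r2: "r \<ge> 2" using r r1 by auto
      have Q5: "Q \<ge> 5" using Q r2 by simp
      have f0: "f 0 = -2" using d0 r1 k1 unfolding f_def by (simp add: of_nat_diff)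
      have ck: "c k = -2" using cj[of k] k f0 by simp
      define T where "T = (\<Sum>j<k. c (m+j) * Q^(k-1-j))"
      have Vk: "V k = c k * Q^k + T"
        unfolding V_def T_def k sum.lessThan_Suc_shift by (simp del: sum.lessThan_Suc)
      have tailb: "\<bar>c (m+j)\<bar> \<le> 1" if "j < k" for j
      proof -
        have "c (m+j) = - f (m-1-j)" using anti[of j] cj[of j] that k by (simp add: add.commute)
        moreover have "f (m-1-j) \<in> {-1,0,1}" using fmid[of "m-1-j"] that k by simp
        ultimately show ?thesis by auto
      qed
      have Tb: "\<bar>T\<bar> \<le> G" unfolding T_def G_def using tailb Q3 by (intro bnd) auto
      have "4 * G \<le> (Q - 1) * G" using Q5 unfolding G_def by (intro mult_right_mono) (auto intro: sum_nonneg)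
      then have G4: "4 * G \<le> Q^k - 1" using geoG by simp
      have "5 * Q^k \<le> Q * Q^k" using Q5 by (intro mult_right_mono) auto
      moreover have "Q^m = Q * Q^k" using k by simp
      ultimately have n5: "2 * int n \<ge> 5 * Q^k + 1" using Nn by simp
      have "V k < V 0" using Vk ck Tb G4 Fgt V0 by simp
      moreover have "- int n \<le> V k" "V k < int n" using Vk ck Tb G4 n5 by simp_all
      ultimately show False using key[of k] by simp
    qed
  qed
qed

end
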